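(* Let $A$ be a nontrivial closed class of decision tables from $\mathcal M_2^\infty$ and $\psi$ a bounded complexity measure. If the function $G_{\psi,A}$ is not everywhere defined, then the function $\mathcal H^\infty_{\psi,A}$ is not everywhere defined.
   Context: Notation: $\omega=\{0,1,2,\dots\}$; $\mathcal P(\omega)$ is the set of nonempty finite subsets of $\omega$; $E_2=\{0,1\}$. $P=\{f_i:i\in\omega\}$ is a set of attributes, $f_i\neq f_j$ for $i\ne j$. Decision tables: $\mathcal M_2^\infty$ is the set of rectangular tables filled with numbers from $E_2$, whose columns are labeled with pairwise different attributes from $P$, whose rows are pairwise different, and each row of which is labeled with a set from $\mathcal P(\omega)$ (its set of decisions). The empty table (no rows) is denoted $\Lambda$ and belongs to $\mathcal M_2^\infty$. For $T\in\mathcal M_2^\infty$: $\Pi(T)$ is the intersection of the decision sets of all rows (common decisions); $\mathrm{At}(T)$ is the set of attributes labeling columns. For nonempty $T$, $\Omega_2(T)$ is the set of finite words (including the empty word $\lambda$) over the alphabet $\{(f_i,\delta):f_i\in\mathrm{At}(T),\delta\in E_2\}$; for $\alpha=(f_{i_1},\delta_1)\cdots(f_{i_m},\delta_m)$, $T\alpha$ is the subtable of $T$ consisting of the rows having value $\delta_j$ in the column $f_{i_j}$ for all $j$, and $T\lambda=T$. Operations: for $D\subseteq\mathrm{At}(T)$, $I(D,T)$ is obtained from $T$ by deleting the columns labeled with attributes from $D$ and, in each group of rows coinciding on the remaining columns, keeping only the first row; $I(\mathrm{At}(T),T)=\Lambda$. For $\nu:E_2^{|\mathrm{At}(T)|}\to\mathcal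 P(\omega)$, $J(\nu,T)$ is obtained by replacing the decision set of each row $\bar\delta$ by $\nu(\bar\delta)$. $[T]=\{J(\nu,I(D,T)):D\subseteq\mathrm{At}(T),\ \nu:E_2^{|\mathrm{At}(T)\setminus D|}\to\mathcal P(\omega)\}$; for nonempty $A\subseteq\mathcal M_2^\infty$, $[A]=\bigcup_{T\in A}[T]$. $A$ is a closed class if $[A]=A$; nontrivial if it contains a nonempty table. Decision trees: a $2$-decision tree is a finite directed rooted tree with at least two nodes in which the root and the edges leaving the root are unlabeled, each terminal node is labeled with a decision from $\omega$, and each other node is labeled with an attribute from $P$, each edge leaving such a node being labeled with a number from $E_2$. $\mathrm{At}(\Gamma)$ is the set of attributes labeling nodes of $\Gamma$. For a complete path $\tau=v_1,d_1,\dots,v_m,d_m,v_{m+1}$ (from the root to a terminal node), $\pi(\tau)=\lambda$ if $m=1$, and otherwise $\pi(\tau)=(f_{i_2},\delta_2)\cdots(f_{i_m},\delta_m)$ where $v_j$ is labeled $f_{i_j}$ and $d_j$ is labeled $\delta_j$; $T(\tau)=T\pi(\tau)$. For $T\ne\Lambda$, a nondeterministic decision tree for $T$ is a $2$-decision tree $\Gamma$ with $\mathrm{At}(\Gamma)\subseteq\mathrm{At}(T)$ such that every row of $T$ belongs to $T(\tau)$ for some complete path $\tau$, and for every complete path $\tau$ either $T(\tau)=\Lambda$ or the decision at the terminal node of $\tau$ belongs to $\Pi(T(\tau))$. A deterministic decision tree for $T$ is a nondeterministic decision tree for $T$ in which, additionally, exactly one edge leaves the root and the edges leaving any node that is neither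 the root nor terminal are labeled with pairwise different numbers. Complexity measures: a partially bounded complexity measure is a function $\psi:P^*\to\omega$ on finite words over $P$ such that for all words $\alpha_1,\alpha_2$: $\psi(\alpha_1)=0$ iff $\alpha_1=\lambda$; $\psi(\alpha_1)$ is invariant under permutation of letters; $\psi(\alpha_1)\le\psi(\alpha_1\alpha_2)$; $\psi(\alpha_1\alpha_2)\le\psi(\alpha_1)+\psi(\alpha_2)$. It is bounded if in addition $\psi(\alpha)\ge|\alpha|$ for all $\alpha$. $\psi$ is extended to words $(f_{i_1},\delta_1)\cdots(f_{i_m},\delta_m)$ by $\psi(f_{i_1}\cdots f_{i_m})$ ($\psi(\lambda)=0$). For a $2$-decision tree $\Gamma$, $\psi(\Gamma)=\max_\tau\psi(\pi(\tau))$ over complete paths. For $T\ne\Lambda$, $\psi^d(T)$ (resp. $\psi^a(T)$) is the minimum of $\psi(\Gamma)$ over deterministic (resp. nondeterministic) decision trees $\Gamma$ for $T$; $\psi^d(\Lambda)=\psi^a(\Lambda)=0$. Parameters: $m_\psi(T)=\max\{\psi(f_i):f_i\in\mathrm{At}(T)\}$, $m_\psi(\Lambda)=0$. A word $\alpha\in\Omega_2(T)$ is annihilating for $T$ if $T\alpha=\Lambda$ and $\alpha$ contains no two letters $(f_i,\delta),(f_i,\sigma)$ with $\delta\ne\sigma$; it is irreducible if no word obtained from $\alpha$ by deleting some (at least one) letters is annihilating for $T$; $G(T)$ is the maximum length of an irreducible annihilating word for $T$ if one exists, and $0$ otherwise; $G(\Lambda)=0$. For $n\in\omega$: $A_\psi(n)=\{T\in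 A:m_\psi(T)\le n\}$; $G_{\psi,A}(n)$ is undefined if $\{G(T):T\in A_\psi(n)\}$ is infinite, else its maximum; $\mathcal H^\infty_{\psi,A}(n)$ is undefined if $\{\psi^d(T):T\in A,\psi^a(T)\le n\}$ is infinite, else its maximum. *)

theory Defs
  imports Main "HOL-Library.Multiset" "HOL-Library.Sublist"
begin

text \<open>Attribute f_i is represented by the natural number i; values of E_2 are the
naturals 0 and 1. A table is a pair (list of column attributes, list of rows), each
row being a pair (value vector, set of decisions). The order of rows is kept
(the operation I keeps the first row of each group).\<close>

type_synonym table = "nat list \<times> (nat list \<times> nat set) list"

definition Lambda :: table where "Lambda = ([], [])"

definition wf_table :: "table \<Rightarrow> bool" where
  "wf_table T \<longleftrightarrow> distinct (fst T) \<and> distinct (map fst (snd T)) \<and>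
     (\<forall>(r, d) \<in> set (snd T). length r = length (fst T) \<and> set r \<subseteq> {0, 1}
        \<and> d \<noteq> {} \<and> finite d) \<and>
     (snd T = [] \<longleftrightarrow> fst T = [])"

definition M2 :: "table set" where "M2 = {T. wf_table T}"

definition At :: "table \<Rightarrow> nat set" where "At T = set (fst T)"

definition Pi :: "table \<Rightarrow> nat set" where "Pi T = (\<Inter>(r, d) \<in> set (snd T). d)"

definition entry :: "nat list \<Rightarrow> nat list \<Rightarrow> nat \<Rightarrow> nat" where
  "entry cs r f = the (map_of (zip cs r) f)"

type_synonym word = "(nat \<times> nat) list"

definition Omega2 :: "table \<Rightarrow> word set" where
  "Omega2 T = {\<alpha>. \<forall>(f, \<delta>) \<in> set \<alpha>. f \<in> At T \<and> \<delta> \<in> {0, 1}}"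

definition sat :: "nat list \<Rightarrow> nat list \<Rightarrow> word \<Rightarrow> bool" where
  "sat cs r \<alpha> \<longleftrightarrow> (\<forall>(f, \<delta>) \<in> set \<alpha>. entry cs r f = \<delta>)"

text \<open>the subtable T alpha (normalised to Lambda when it has no rows)\<close>
definition sub :: "table \<Rightarrow> word \<Rightarrow> table" where
  "sub T \<alpha> = (let rs = filter (\<lambda>(r, d). sat (fst T) r \<alpha>) (snd T)
              in if rs = [] then Lambda else (fst T, rs))"

definition Idel :: "nat set \<Rightarrow> table \<Rightarrow> table" where
  "Idel D T = (let cs = fst T; rs = snd T; cs' = filter (\<lambda>f. f \<notin> D) cs;
                   pr = (\<lambda>r. map (entry cs r) cs')
    in if cs' = [] then Lambda
       else (cs', [(pr (fst (rs ! i)), snd (rs ! i)).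
                     i \<leftarrow> [0..<length rs], \<forall>j<i. pr (fst (rs ! j)) \<noteq> pr (fst (rs ! i))]))"

definition Jrep :: "(nat list \<Rightarrow> nat set) \<Rightarrow> table \<Rightarrow> table" where
  "Jrep \<nu> T = (fst T, map (\<lambda>(r, d). (r, \<nu> r)) (snd T))"

definition closure1 :: "table \<Rightarrow> table set" where
  "closure1 T = {Jrep \<nu> (Idel D T) | D \<nu>. D \<subseteq> At T \<and>
      (\<forall>v. length v = card (At T - D) \<and> set v \<subseteq> {0, 1} \<longrightarrow> \<nu> v \<noteq> {} \<and> finite (\<nu> v))}"

definition closure :: "table set \<Rightarrow> table set" where
  "closure A = (\<Union>T \<in> A. closure1 T)"

definition closed_class :: "table set \<Rightarrow> bool" where
  "closed_class A \<longleftrightarrow> A \<noteq> {} \<and> A \<subseteq> M2 \<and> closure A = A"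

definition nontrivial :: "table set \<Rightarrow> bool" where
  "nontrivial A \<longleftrightarrow> (\<exists>T \<in> A. T \<noteq> Lambda)"

text \<open>A non-root node: a terminal node labeled with a decision, or a node labeled with
an attribute with a list of outgoing edges (edge label, subtree). A 2-decision tree is
the (nonempty) list of subtrees hanging from the unlabeled root.\<close>

datatype dnode = Leaf nat | Node nat "(nat \<times> dnode) list"

type_synonym dtree = "dnode list"

inductive wf_node :: "dnode \<Rightarrow> bool" where
  "wf_node (Leaf d)"
| "cs \<noteq> [] \<Longrightarrow> (\<And>\<delta> c. (\<delta>, c) \<in> set cs \<Longrightarrow> \<delta> \<in> {0, 1} \<and> wf_node c) \<Longrightarrow> wf_node (Node f cs)"

inductive det_node :: "dnode \<Rightarrow> bool" where
  "det_node (Leaf d)"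
| "distinct (map fst cs) \<Longrightarrow> (\<And>\<delta> c. (\<delta>, c) \<in> set cs \<Longrightarrow> det_node c) \<Longrightarrow> det_node (Node f cs)"

inductive node_attr :: "dnode \<Rightarrow> nat \<Rightarrow> bool" where
  "node_attr (Node f cs) f"
| "(\<delta>, c) \<in> set cs \<Longrightarrow> node_attr c g \<Longrightarrow> node_attr (Node f cs) g"

inductive node_path :: "dnode \<Rightarrow> word \<Rightarrow> nat \<Rightarrow> bool" where
  "node_path (Leaf d) [] d"
| "(\<delta>, c) \<in> set cs \<Longrightarrow> node_path c w d \<Longrightarrow> node_path (Node f cs) ((f, \<delta>) # w) d"

definition wf_tree :: "dtree \<Rightarrow> bool" where
  "wf_tree \<Gamma> \<longleftrightarrow> \<Gamma> \<noteq> [] \<and> (\<forall>c \<in> set \<Gamma>. wf_node c)"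

definition tree_At :: "dtree \<Rightarrow> nat set" where
  "tree_At \<Gamma> = {f. \<exists>c \<in> set \<Gamma>. node_attr c f}"

text \<open>complete paths tau of Gamma, given by (pi(tau), decision at the terminal node)\<close>
definition tree_path :: "dtree \<Rightarrow> word \<Rightarrow> nat \<Rightarrow> bool" where
  "tree_path \<Gamma> w d \<longleftrightarrow> (\<exists>c \<in> set \<Gamma>. node_path c w d)"

definition nondet_tree_for :: "table \<Rightarrow> dtree \<Rightarrow> bool" where
  "nondet_tree_for T \<Gamma> \<longleftrightarrow> wf_tree \<Gamma> \<and> tree_At \<Gamma> \<subseteq> At T \<and>
     (\<forall>row \<in> set (snd T). \<exists>w d. tree_path \<Gamma> w d \<and> row \<in> set (snd (sub T w))) \<and>
     (\<forall>w d. tree_path \<Gamma> w d \<longrightarrow> sub T w = Lambda \<or> d \<in> Pi (sub T w))"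

definition det_tree_for :: "table \<Rightarrow> dtree \<Rightarrow> bool" where
  "det_tree_for T \<Gamma> \<longleftrightarrow> nondet_tree_for T \<Gamma> \<and> length \<Gamma> = 1 \<and> (\<forall>c \<in> set \<Gamma>. det_node c)"

definition partially_bounded_measure :: "(nat list \<Rightarrow> nat) \<Rightarrow> bool" where
  "partially_bounded_measure \<psi> \<longleftrightarrow>
     (\<forall>\<alpha>. \<psi> \<alpha> = 0 \<longleftrightarrow> \<alpha> = []) \<and>
     (\<forall>\<alpha> \<beta>. mset \<alpha> = mset \<beta> \<longrightarrow> \<psi> \<alpha> = \<psi> \<beta>) \<and>
     (\<forall>\<alpha> \<beta>. \<psi> \<alpha> \<le> \<psi> (\<alpha> @ \<beta>)) \<and>
     (\<forall>\<alpha> \<beta>. \<psi> (\<alpha> @ \<beta>) \<le> \<psi> \<alpha> + \<psi> \<beta>)"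

definition bounded_measure :: "(nat list \<Rightarrow> nat) \<Rightarrow> bool" where
  "bounded_measure \<psi> \<longleftrightarrow> partially_bounded_measure \<psi> \<and> (\<forall>\<alpha>. length \<alpha> \<le> \<psi> \<alpha>)"

definition psi_word :: "(nat list \<Rightarrow> nat) \<Rightarrow> word \<Rightarrow> nat" where
  "psi_word \<psi> w = \<psi> (map fst w)"

definition psi_tree :: "(nat list \<Rightarrow> nat) \<Rightarrow> dtree \<Rightarrow> nat" where
  "psi_tree \<psi> \<Gamma> = Max {psi_word \<psi> w | w d. tree_path \<Gamma> w d}"

definition psi_d :: "(nat list \<Rightarrow> nat) \<Rightarrow> table \<Rightarrow> nat" where
  "psi_d \<psi> T = (if T = Lambda then 0
     else (LEAST n. \<exists>\<Gamma>. det_tree_for T \<Gamma> \<and> psi_tree \<psi> \<Gamma> = n))"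

definition psi_a :: "(nat list \<Rightarrow> nat) \<Rightarrow> table \<Rightarrow> nat" where
  "psi_a \<psi> T = (if T = Lambda then 0
     else (LEAST n. \<exists>\<Gamma>. nondet_tree_for T \<Gamma> \<and> psi_tree \<psi> \<Gamma> = n))"

definition m_psi :: "(nat list \<Rightarrow> nat) \<Rightarrow> table \<Rightarrow> nat" where
  "m_psi \<psi> T = (if T = Lambda then 0 else Max {\<psi> [f] | f. f \<in> At T})"

definition annihilating :: "table \<Rightarrow> word \<Rightarrow> bool" where
  "annihilating T \<alpha> \<longleftrightarrow> \<alpha> \<in> Omega2 T \<and> sub T \<alpha> = Lambda \<and>
     \<not> (\<exists>f \<delta> \<sigma>. (f, \<delta>) \<in> set \<alpha> \<and> (f, \<sigma>) \<in> set \<alpha> \<and> \<delta> \<noteq> \<sigma>)"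

definition irreducible_ann :: "table \<Rightarrow> word \<Rightarrow> bool" where
  "irreducible_ann T \<alpha> \<longleftrightarrow> annihilating T \<alpha> \<and>
     \<not> (\<exists>\<beta>. subseq \<beta> \<alpha> \<and> \<beta> \<noteq> \<alpha> \<and> annihilating T \<beta>)"

definition G :: "table \<Rightarrow> nat" where
  "G T = (if T = Lambda then 0
          else if \<exists>\<alpha>. irreducible_ann T \<alpha> then Max {length \<alpha> | \<alpha>. irreducible_ann T \<alpha>}
          else 0)"

text \<open>A_psi(n), G_{psi,A}(n) and H^infty_{psi,A}(n); None means undefined\<close>
definition A_psi :: "(nat list \<Rightarrow> nat) \<Rightarrow> table set \<Rightarrow> nat \<Rightarrow> table set" where
  "A_psi \<psi> A n = {T \<in> A. m_psi \<psi> T \<le> n}"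

definition G_fun :: "(nat list \<Rightarrow> nat) \<Rightarrow> table set \<Rightarrow> nat \<Rightarrow> nat option" where
  "G_fun \<psi> A n = (let S = G ` A_psi \<psi> A n in if finite S then Some (Max S) else None)"

definition H_fun :: "(nat list \<Rightarrow> nat) \<Rightarrow> table set \<Rightarrow> nat \<Rightarrow> nat option" where
  "H_fun \<psi> A n = (let S = {psi_d \<psi> T | T. T \<in> A \<and> psi_a \<psi> T \<le> n}
                   in if finite S then Some (Max S) else None)"

end

theory Submission
  imports Defs
begin

lemma subseq_remdups: "subseq (remdups xs) xs"
  by (induction xs) auto

lemma sub_memI:
  assumes "row \<in> set (snd T)" "sat (fst T) (fst row) w"
  shows "sub T w \<noteq> Lambda \<and> row \<in> set (snd (sub T w)) \<and> fst (sub T w) = fst T"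
proof -
  have "row \<in> set (filter (\<lambda>(r, d). sat (fst T) r w) (snd T))"
    using assms by (cases row) auto
  then show ?thesis unfolding sub_def Let_def Lambda_def
    by (cases "filter (\<lambda>(r, d). sat (fst T) r w) (snd T)") auto
qed

lemma sub_memD:
  assumes "row \<in> set (snd (sub T w))"
  shows "row \<in> set (snd T) \<and> sat (fst T) (fst row) w"
  using assms unfolding sub_def Let_def Lambda_def
  by (cases "filter (\<lambda>(r, d). sat (fst T) r w) (snd T) = []") (auto split: prod.splits)

lemma sub_Lambda_iff:
  "sub T w = Lambda \<longleftrightarrow> (\<forall>row \<in> set (snd T). \<not> sat (fst T) (fst row) w)"
  unfolding sub_def Let_def Lambda_def
  by (auto simp: filter_empty_conv split: prod.splits)

lemma Pi_sub_row:
  assumes "(v, e) \<in> set (snd T)" shows "Pi T \<subseteq> e"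
  using assms unfolding Pi_def by auto

lemma sat_append: "sat cs r (p @ w) \<longleftrightarrow> sat cs r p \<and> sat cs r w"
  by (simp add: sat_def ball_Un)

lemma wf_node_path: "wf_node c \<Longrightarrow> \<exists>w d. node_path c w d"
proof (induction rule: wf_node.induct)
  case (1 d) then show ?case by (auto intro: node_path.intros)
next
  case (2 cs f)
  then obtain \<delta> c where "(\<delta>, c) \<in> set cs" by (cases cs) auto
  with 2 obtain w d where "node_path c w d" by blast
  then show ?case using \<open>(\<delta>, c) \<in> set cs\<close> by (auto intro: node_path.intros)
qed

lemma finite_node_paths: "finite {(w, d). node_path c w d}"
proof (induction c)
  case (Leaf x)
  have "{(w, d). node_path (Leaf x) w d} = {([], x)}"
    by (auto elim: node_path.cases intro: node_path.intros)
  then show ?case by simp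
next
  case (Node f cs)
  have "{(w, d). node_path (Node f cs) w d} \<subseteq>
     (\<Union>p \<in> set cs. (\<lambda>(w, d). ((f, fst p) # w, d)) ` {(w, d). node_path (snd p) w d})"
  proof
    fix x assume "x \<in> {(w, d). node_path (Node f cs) w d}"
    then obtain w d where x: "x = (w, d)" "node_path (Node f cs) w d" by blast
    then obtain \<delta> c w' where "w = (f, \<delta>) # w'" "(\<delta>, c) \<in> set cs" "node_path c w' d"
      by (auto elim: node_path.cases)
    then show "x \<in> (\<Union>p \<in> set cs. (\<lambda>(w, d). ((f, fst p) # w, d)) ` {(w, d). node_path (snd p) w d})"
      using x by (intro UN_I[of "(\<delta>, c)"]) auto
  qed
  moreover have "finite (\<Union>p \<in> set cs. (\<lambda>(w, d). ((f, fst p) # w, d)) ` {(w, d). node_path (snd p) w d})"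
  proof (rule finite_UN_I)
    show "finite (set cs)" by simp
    fix p assume "p \<in> set cs"
    then show "finite ((\<lambda>(w, d). ((f, fst p) # w, d)) ` {(w, d). node_path (snd p) w d})"
    proof -
      have "snd p \<in> Basic_BNFs.snds p" by (cases p) (simp add: prod_set_simps)
      from Node.IH[OF \<open>p \<in> set cs\<close> this] show ?thesis by simp
    qed
  qed
  ultimately show ?case by (rule finite_subset)
qed

lemma finite_tree_psis: "finite {psi_word \<psi> w | w d. tree_path \<Gamma> w d}"
proof -
  have "{psi_word \<psi> w | w d. tree_path \<Gamma> w d} =
     (\<lambda>(w, d). psi_word \<psi> w) ` (\<Union>c \<in> set \<Gamma>. {(w, d). node_path c w d})"
    unfolding tree_path_def by auto
  then show ?thesis using finite_node_paths by auto
qed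

lemma psi_tree_ge:
  "tree_path \<Gamma> w d \<Longrightarrow> psi_word \<psi> w \<le> psi_tree \<psi> \<Gamma>"
  unfolding psi_tree_def by (rule Max_ge[OF finite_tree_psis]) blast

lemma two_missing:
  assumes "finite F" "card (F \<inter> A) + 1 < card F"
  obtains f f' where "f \<in> F" "f' \<in> F" "f \<notin> A" "f' \<notin> A" "f \<noteq> f'"
proof -
  have c: "card (F - A) = card F - card (F \<inter> A)"
    using assms(1) by (simp add: card_Diff_subset_Int)
  then have "card (F - A) \<ge> 2" using assms(2) by linarith
  then obtain f where f: "f \<in> F - A" by (metis card.empty not_numeral_le_zero equals0I)
  have "card (F - A - {f}) \<ge> 1" using f \<open>card (F - A) \<ge> 2\<close> assms(1) by simp
  then obtain f' where "f' \<in> F - A - {f}" by (metis card.empty not_one_le_zero equals0I)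
  then show ?thesis using f that by blast
qed

lemma LB:
  fixes Q :: table and F :: "nat set" and dl :: "nat \<Rightarrow> nat"
  assumes finF: "finite F"
    and R: "\<And>f. f \<in> F \<Longrightarrow> \<exists>v. (v, {f}) \<in> set (snd Q) \<and> (\<forall>g\<in>F-{f}. entry (fst Q) v g = dl g)"
  shows "det_node c \<Longrightarrow> wf_node c \<Longrightarrow> (\<forall>g. node_attr c g \<longrightarrow> g \<in> F)
    \<Longrightarrow> (\<forall>(g,\<delta>)\<in>set p. g \<in> F \<and> \<delta> = dl g)
    \<Longrightarrow> (\<forall>row\<in>set (snd Q). sat (fst Q) (fst row) p \<longrightarrow> (\<exists>w d. node_path c w d \<and> sat (fst Q) (fst row) w))
    \<Longrightarrow> (\<forall>w d. node_path c w d \<longrightarrow> sub Q (p@w) = Lambda \<or> d \<in> Pi (sub Q (p@w)))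
    \<Longrightarrow> \<exists>w d. node_path c w d \<and> card F \<le> card (F \<inter> fst ` set (p@w)) + 1"
proof (induction c arbitrary: p rule: det_node.induct)
  have Rsat: "\<exists>v. (v, {f}) \<in> set (snd Q) \<and> sat (fst Q) v p"
    if "f \<in> F" "\<forall>(g,\<delta>)\<in>set p. g \<in> F \<and> \<delta> = dl g" "f \<notin> fst ` set p" for f p
  proof -
    obtain v where v: "(v, {f}) \<in> set (snd Q)" "\<forall>g\<in>F-{f}. entry (fst Q) v g = dl g"
      using R \<open>f \<in> F\<close> by blast
    have "sat (fst Q) v p" unfolding sat_def
    proof (intro ballI, clarify)
      fix g \<delta> assume "(g, \<delta>) \<in> set p"
      then have "g \<in> F" "\<delta> = dl g" "g \<noteq> f" using that(2,3) by (auto simp: rev_image_eqI)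
      then show "entry (fst Q) v g = \<delta>" using v by auto
    qed
    then show ?thesis using v by blast
  qed
  case (1 d)
  show ?case
  proof (rule ccontr)
    assume "\<not> ?case"
    then have "card (F \<inter> fst ` set p) + 1 < card F"
      using node_path.intros(1)[of d] by fastforce
    then obtain f f' where ff: "f \<in> F" "f' \<in> F" "f \<notin> fst ` set p" "f' \<notin> fst ` set p" "f \<noteq> f'"
      using two_missing finF by blast
    obtain v where v: "(v, {f}) \<in> set (snd Q)" "sat (fst Q) v p" using Rsat ff 1 by blast
    obtain v' where v': "(v', {f'}) \<in> set (snd Q)" "sat (fst Q) v' p" using Rsat ff 1 by blast
    have s1: "sub Q p \<noteq> Lambda" "(v, {f}) \<in> set (snd (sub Q p))" using sub_memI[of "(v, {f})" Q p] v by auto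
    have s2: "(v', {f'}) \<in> set (snd (sub Q p))" using sub_memI[of "(v', {f'})" Q p] v' by auto
    have "d \<in> Pi (sub Q p)" using 1(5)[rule_format, OF node_path.intros(1)[of d]] s1 by simp
    then show False using Pi_sub_row[OF s1(2)] Pi_sub_row[OF s2] ff(5) by blast
  qed
next
  case (2 cs h)
  have hF: "h \<in> F" using 2(5) node_attr.intros(1) by blast
  have wfc: "\<And>\<delta> c. (\<delta>, c) \<in> set cs \<Longrightarrow> wf_node c"
    using 2(4) by (auto elim: wf_node.cases)
  show ?case
  proof (cases "card F \<le> card (F \<inter> fst ` set p) + 1")
    case True
    obtain w d where "node_path (Node h cs) w d" using wf_node_path[OF 2(4)] by blast
    moreover have "card (F \<inter> fst ` set p) \<le> card (F \<inter> fst ` set (p @ w))"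
      using finF by (intro card_mono) auto
    ultimately show ?thesis using True by (intro exI[of _ w] exI[of _ d]) auto
  next
    case False
    then have "card (F \<inter> fst ` set p) + 1 < card F" by simp
    then obtain f f' where ff: "f \<in> F" "f' \<in> F" "f \<notin> fst ` set p" "f' \<notin> fst ` set p" "f \<noteq> f'"
      using two_missing finF by blast
    obtain f0 where f0: "f0 \<in> F" "f0 \<notin> fst ` set p" "f0 \<noteq> h" using ff by metis
    obtain v where v: "(v, {f0}) \<in> set (snd Q)" "\<forall>g\<in>F-{f0}. entry (fst Q) v g = dl g"
      using R[OF f0(1)] by blast
    have "sat (fst Q) v p" unfolding sat_def
    proof (intro ballI, clarify)
      fix g \<delta> assume "(g, \<delta>) \<in> set p"
      then have "g \<in> F" "\<delta> = dl g" "g \<noteq> f0" using 2(6) f0(2) by (auto simp: rev_image_eqI)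
      then show "entry (fst Q) v g = \<delta>" using v by auto
    qed
    then obtain w d where wd: "node_path (Node h cs) w d" "sat (fst Q) v w"
      using 2(7) v(1) by fastforce
    then obtain \<delta>' c' w' where w: "w = (h, \<delta>') # w'" "(\<delta>', c') \<in> set cs" "node_path c' w' d"
      by (auto elim: node_path.cases)
    have "\<delta>' = dl h" using wd(2) w(1) v(2) hF f0(3) by (auto simp: sat_def)
    define p' where "p' = p @ [(h, dl h)]"
    have ex: "\<exists>w d. node_path c' w d \<and> card F \<le> card (F \<inter> fst ` set (p' @ w)) + 1"
    proof (rule 2(3)[OF w(2)])
      show "wf_node c'" using wfc w(2) by blast
      show "\<forall>g. node_attr c' g \<longrightarrow> g \<in> F"
        using 2(5) w(2) node_attr.intros(2) by blast
      show "\<forall>(g, \<delta>)\<in>set p'. g \<in> F \<and> \<delta> = dl g" using 2(6) hF unfolding p'_def by auto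
      show "\<forall>row\<in>set (snd Q). sat (fst Q) (fst row) p' \<longrightarrow>
              (\<exists>w d. node_path c' w d \<and> sat (fst Q) (fst row) w)"
      proof (intro ballI impI)
        fix row assume row: "row \<in> set (snd Q)" "sat (fst Q) (fst row) p'"
        then have "sat (fst Q) (fst row) p" "entry (fst Q) (fst row) h = dl h"
          unfolding p'_def sat_append by (auto simp: sat_def)
        then obtain w2 d2 where "node_path (Node h cs) w2 d2" "sat (fst Q) (fst row) w2"
          using 2(7) row(1) by blast
        then obtain \<delta>2 c2 w2' where w2: "w2 = (h, \<delta>2) # w2'" "(\<delta>2, c2) \<in> set cs" "node_path c2 w2' d2"
          by (auto elim: node_path.cases)
        have "\<delta>2 = dl h" using \<open>sat (fst Q) (fst row) w2\<close> w2(1) \<open>entry (fst Q) (fst row) h = dl h\<close>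
          by (auto simp: sat_def)
        then have "c2 = c'" using eq_key_imp_eq_value[OF 2(1)] w2(2) w(2) \<open>\<delta>' = dl h\<close> by blast
        then show "\<exists>w d. node_path c' w d \<and> sat (fst Q) (fst row) w"
          using w2 \<open>sat (fst Q) (fst row) w2\<close> by (auto simp: sat_def)
      qed
      show "\<forall>w d. node_path c' w d \<longrightarrow> sub Q (p' @ w) = Lambda \<or> d \<in> Pi (sub Q (p' @ w))"
      proof (intro allI impI)
        fix w d assume "node_path c' w d"
        then have "node_path (Node h cs) ((h, dl h) # w) d"
          using w(2) \<open>\<delta>' = dl h\<close> node_path.intros(2) by blast
        then show "sub Q (p' @ w) = Lambda \<or> d \<in> Pi (sub Q (p' @ w))"
          using 2(8) unfolding p'_def by fastforce
      qed
    qed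
    then obtain w3 d3 where "node_path c' w3 d3" "card F \<le> card (F \<inter> fst ` set (p' @ w3)) + 1"
      by blast
    moreover have "node_path (Node h cs) ((h, dl h) # w3) d3"
      using calculation(1) w(2) \<open>\<delta>' = dl h\<close> node_path.intros(2) by blast
    ultimately show ?thesis unfolding p'_def by (intro exI[of _ "(h, dl h) # w3"] exI[of _ d3]) simp
  qed
qed

lemma entry_map: "distinct cs \<Longrightarrow> g \<in> set cs \<Longrightarrow> entry cs (map h cs) g = h g"
  unfolding entry_def by (simp add: map_of_zip_map)

lemma entry_in: assumes "length r = length cs" "f \<in> set cs" shows "entry cs r f \<in> set r"
proof -
  have "f \<in> dom (map_of (zip cs r))" using assms by (simp add: dom_map_of_zip)
  then obtain x where x: "map_of (zip cs r) f = Some x" by blast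
  then have "(f, x) \<in> set (zip cs r)" by (rule map_of_SomeD)
  then have "x \<in> set r" by (rule set_zip_rightD)
  then show ?thesis using x unfolding entry_def by simp
qed

fun chain :: "word \<Rightarrow> dnode" where
  "chain [] = Leaf 0"
| "chain ((f, \<delta>) # rest) = Node f [(1 - \<delta>, Leaf f), (\<delta>, chain rest)]"

lemma leaf_no_attr: "\<not> node_attr (Leaf d) g"
  by (auto elim: node_attr.cases)

lemma chain_wf: "\<forall>(f, \<delta>) \<in> set xs. \<delta> \<in> {0, 1} \<Longrightarrow> wf_node (chain xs) \<and> det_node (chain xs)"
proof (induction xs)
  case Nil then show ?case by (simp add: wf_node.intros det_node.intros)
next
  case (Cons a xs)
  obtain f \<delta> where a: "a = (f, \<delta>)" by (cases a)
  then have d01: "\<delta> \<in> {0,1}" using Cons.prems by auto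
  then have ne: "1 - \<delta> \<noteq> \<delta>" by auto
  have ih: "wf_node (chain xs)" "det_node (chain xs)" using Cons by auto
  have "wf_node (Node f [(1 - \<delta>, Leaf f), (\<delta>, chain xs)])"
  proof (rule wf_node.intros(2))
    fix \<epsilon> c assume "(\<epsilon>, c) \<in> set [(1 - \<delta>, Leaf f), (\<delta>, chain xs)]"
    then show "\<epsilon> \<in> {0, 1} \<and> wf_node c" using d01 ih by (auto simp: wf_node.intros)
  qed simp
  moreover have "det_node (Node f [(1 - \<delta>, Leaf f), (\<delta>, chain xs)])"
  proof (rule det_node.intros(2))
    fix \<epsilon> c assume "(\<epsilon>, c) \<in> set [(1 - \<delta>, Leaf f), (\<delta>, chain xs)]"
    then show "det_node c" using ih by (auto simp: det_node.intros)
  qed (use ne in simp)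
  ultimately show ?case using a by simp
qed

lemma chain_attr: "node_attr (chain xs) g \<Longrightarrow> g \<in> fst ` set xs"
proof (induction xs)
  case Nil then show ?case using leaf_no_attr by simp
next
  case (Cons a xs)
  obtain f \<delta> where a: "a = (f, \<delta>)" by (cases a)
  from Cons.prems have "node_attr (Node f [(1 - \<delta>, Leaf f), (\<delta>, chain xs)]) g" using a by simp
  then have "g = f \<or> (\<exists>\<epsilon> c. (\<epsilon>, c) \<in> set [(1 - \<delta>, Leaf f), (\<delta>, chain xs)] \<and> node_attr c g)"
    by (cases rule: node_attr.cases) auto
  then have "g = f \<or> node_attr (chain xs) g" using leaf_no_attr by auto
  then show ?case using Cons.IH a by auto
qed

lemma chain_path: "node_path (chain xs) w d \<Longrightarrow>
  w = xs \<or> (\<exists>a f \<delta> b. xs = a @ (f, \<delta>) # b \<and> w = a @ [(f, 1 - \<delta>)] \<and> d = f)"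
proof (induction xs arbitrary: w)
  case Nil then show ?case by (auto elim: node_path.cases)
next
  case (Cons x xs)
  obtain f \<delta> where x: "x = (f, \<delta>)" by (cases x)
  from Cons.prems obtain \<delta>' c w' where w: "w = (f, \<delta>') # w'" "(\<delta>', c) \<in> {(1 - \<delta>, Leaf f), (\<delta>, chain xs)}"
    "node_path c w' d"
    unfolding x by (auto elim: node_path.cases)
  show ?case
  proof (cases "(\<delta>', c) = (1 - \<delta>, Leaf f)")
    case True
    then have "w' = []" "d = f" using w(3) by (auto elim: node_path.cases)
    then show ?thesis using w True x by (intro disjI2 exI[of _ "[]"]) auto
  next
    case False
    then have "\<delta>' = \<delta>" "c = chain xs" using w(2) by auto
    with Cons.IH w(3) have "w' = xs \<or> (\<exists>a f \<delta> b. xs = a @ (f, \<delta>) # b \<and> w' = a @ [(f, 1 - \<delta>)] \<and> d = f)"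
      by blast
    then show ?thesis
    proof
      assume "w' = xs" then show ?thesis using w x \<open>\<delta>' = \<delta>\<close> by simp
    next
      assume "\<exists>a f \<delta> b. xs = a @ (f, \<delta>) # b \<and> w' = a @ [(f, 1 - \<delta>)] \<and> d = f"
      then obtain a g \<epsilon> b where "xs = a @ (g, \<epsilon>) # b" "w' = a @ [(g, 1 - \<epsilon>)]" "d = g" by blast
      then show ?thesis using w x \<open>\<delta>' = \<delta>\<close>
        by (intro disjI2 exI[of _ "(f, \<delta>) # a"]) auto
    qed
  qed
qed

lemma chain_cover:
  assumes "\<forall>(f, \<delta>) \<in> set xs. entry cs v f \<in> {0, 1} \<and> \<delta> \<in> {0, 1}" "\<not> sat cs v xs"
  shows "\<exists>w d. node_path (chain xs) w d \<and> sat cs v w"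
  using assms
proof (induction xs)
  case Nil then show ?case by (simp add: sat_def)
next
  case (Cons x xs)
  obtain f \<delta> where x: "x = (f, \<delta>)" by (cases x)
  show ?case
  proof (cases "entry cs v f = \<delta>")
    case False
    then have "entry cs v f = 1 - \<delta>" using Cons.prems(1) x by auto
    moreover have "node_path (chain (x # xs)) [(f, 1 - \<delta>)] f"
      unfolding x by (auto intro: node_path.intros)
    ultimately show ?thesis by (intro exI[of _ "[(f, 1 - \<delta>)]"] exI[of _ f]) (simp add: sat_def)
  next
    case True
    then have "\<not> sat cs v xs" using Cons.prems(2) x by (simp add: sat_def)
    then obtain w d where "node_path (chain xs) w d" "sat cs v w" using Cons by auto
    moreover have "node_path (chain (x # xs)) ((f, \<delta>) # w) d"
      unfolding x using calculation(1) by (auto intro: node_path.intros)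
    ultimately show ?thesis using True by (intro exI[of _ "(f, \<delta>) # w"] exI[of _ d]) (simp add: sat_def)
  qed
qed

lemma sat_set_eq: "set a = set b \<Longrightarrow> sat cs r a = sat cs r b"
  unfolding sat_def by simp

lemma sub_set_eq: "set a = set b \<Longrightarrow> sub T a = sub T b"
  unfolding sub_def using sat_set_eq[of a b] by simp

lemma irr_facts:
  assumes irr: "irreducible_ann T \<alpha>"
  shows "\<forall>(f, \<delta>) \<in> set \<alpha>. f \<in> At T \<and> \<delta> \<in> {0, 1}"
    and "sub T \<alpha> = Lambda"
    and "distinct (map fst \<alpha>)"
    and "\<And>f. f \<in> fst ` set \<alpha> \<Longrightarrow> sub T (filter (\<lambda>x. fst x \<noteq> f) \<alpha>) \<noteq> Lambda"
proof -
  have ann: "annihilating T \<alpha>" and nored: "\<And>\<beta>. subseq \<beta> \<alpha> \<Longrightarrow> \<beta> \<noteq> \<alpha> \<Longrightarrow> \<not> annihilating T \<beta>"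
    using irr unfolding irreducible_ann_def by auto
  then have om: "\<alpha> \<in> Omega2 T" and sl: "sub T \<alpha> = Lambda"
    and nc: "\<not> (\<exists>f \<delta> \<sigma>. (f, \<delta>) \<in> set \<alpha> \<and> (f, \<sigma>) \<in> set \<alpha> \<and> \<delta> \<noteq> \<sigma>)"
    unfolding annihilating_def by auto
  show "\<forall>(f, \<delta>) \<in> set \<alpha>. f \<in> At T \<and> \<delta> \<in> {0, 1}" using om unfolding Omega2_def by auto
  show "sub T \<alpha> = Lambda" by (rule sl)
  have "distinct \<alpha>"
  proof (rule ccontr)
    assume "\<not> distinct \<alpha>"
    then have "remdups \<alpha> \<noteq> \<alpha>" by (metis distinct_remdups)
    moreover have "annihilating T (remdups \<alpha>)"
      using om sl nc sub_set_eq[of "remdups \<alpha>" \<alpha> T]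
      unfolding annihilating_def Omega2_def by auto
    ultimately show False using nored subseq_remdups by blast
  qed
  moreover have "inj_on fst (set \<alpha>)"
    using nc by (auto simp: inj_on_def)
  ultimately show "distinct (map fst \<alpha>)" by (simp add: distinct_map)
  fix f assume "f \<in> fst ` set \<alpha>"
  then obtain \<delta> where fd: "(f, \<delta>) \<in> set \<alpha>" by auto
  let ?\<beta> = "filter (\<lambda>x. fst x \<noteq> f) \<alpha>"
  have "?\<beta> \<noteq> \<alpha>" using fd by (metis (mono_tags, lifting) filter_id_conv fst_conv)
  then have "\<not> annihilating T ?\<beta>" using nored by simp
  moreover have "?\<beta> \<in> Omega2 T" using om unfolding Omega2_def by auto
  moreover have "\<not> (\<exists>f \<delta> \<sigma>. (f, \<delta>) \<in> set ?\<beta> \<and> (f, \<sigma>) \<in> set ?\<beta> \<and> \<delta> \<noteq> \<sigma>)" using nc by auto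
  ultimately show "sub T ?\<beta> \<noteq> Lambda" unfolding annihilating_def by blast
qed

lemma single_node_path: "node_path (Node f [(e, Leaf g)]) w d \<longleftrightarrow> w = [(f, e)] \<and> d = g"
proof
  assume "node_path (Node f [(e, Leaf g)]) w d"
  then obtain \<epsilon> c w' where "w = (f, \<epsilon>) # w'" "(\<epsilon>, c) \<in> set [(e, Leaf g)]" "node_path c w' d"
    by (cases rule: node_path.cases) blast
  moreover then have "node_path (Leaf g) w' d" by simp
  then have "w' = [] \<and> d = g" by (cases rule: node_path.cases) blast
  ultimately show "w = [(f, e)] \<and> d = g" by simp
next
  assume "w = [(f, e)] \<and> d = g"
  then show "node_path (Node f [(e, Leaf g)]) w d"
    using node_path.intros(2)[of e "Leaf g" "[(e, Leaf g)]" "[]" g f] node_path.intros(1)[of g] by simp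
qed

lemma single_node_attr: "node_attr (Node f [(e, Leaf g)]) h \<Longrightarrow> h = f"
  by (cases rule: node_attr.cases) (auto simp: leaf_no_attr)

lemma single_node_wf: "e \<in> {0, 1} \<Longrightarrow> wf_node (Node f [(e, Leaf g)])"
  by (rule wf_node.intros(2)) (auto intro: wf_node.intros(1))

lemma main_constr:
  assumes wf: "wf_table T" and TnL: "T \<noteq> Lambda" and irr: "irreducible_ann T \<alpha>"
    and bm: "bounded_measure \<psi>"
  shows "\<exists>Q \<in> closure1 T. psi_a \<psi> Q \<le> m_psi \<psi> T \<and> length \<alpha> \<le> psi_d \<psi> Q + 1"
proof -
  define cs where "cs = fst T"
  define rs where "rs = snd T"
  define F where "F = fst ` set \<alpha>"
  define dl where "dl = (\<lambda>g. the (map_of \<alpha> g))"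
  define D where "D = At T - F"
  define cs' where "cs' = filter (\<lambda>f. f \<notin> D) cs"
  define pr where "pr = (\<lambda>r. map (entry cs r) cs')"
  define NS where "NS = (\<lambda>v. {g \<in> F. entry cs' v g \<noteq> dl g})"
  define \<nu> where "\<nu> = (\<lambda>v. if NS v = {} then {0} else NS v)"
  define rowsI where "rowsI = [(pr (fst (rs ! i)), snd (rs ! i)).
                     i \<leftarrow> [0..<length rs], \<forall>j<i. pr (fst (rs ! j)) \<noteq> pr (fst (rs ! i))]"
  define Q where "Q = Jrep \<nu> (Idel D T)"
  have dcs: "distinct cs" and rowsw: "\<And>r e. (r, e) \<in> set rs \<Longrightarrow> length r = length cs \<and> set r \<subseteq> {0, 1}"
    and rsne: "rs = [] \<longleftrightarrow> cs = []"
    using wf unfolding wf_table_def cs_def rs_def by auto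
  have csne: "cs \<noteq> []" using TnL rsne unfolding cs_def rs_def Lambda_def by (cases T) auto
  then have rsne2: "rs \<noteq> []" using rsne by simp
  note ir = irr_facts[OF irr]
  have nosat: "\<And>r e. (r, e) \<in> set rs \<Longrightarrow> \<not> sat cs r \<alpha>"
    using ir(2) unfolding sub_Lambda_iff cs_def rs_def by fastforce
  have ane: "\<alpha> \<noteq> []"
  proof
    assume "\<alpha> = []"
    obtain r e where "(r, e) \<in> set rs" using rsne2 by (cases rs) auto
    then show False using nosat \<open>\<alpha> = []\<close> by (simp add: sat_def)
  qed
  have FAt: "F \<subseteq> set cs" using ir(1) unfolding F_def At_def cs_def by auto
  have setcs': "set cs' = F" using FAt unfolding cs'_def D_def At_def cs_def by auto
  have dcs': "distinct cs'" using dcs unfolding cs'_def by simp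
  have cs'ne: "cs' \<noteq> []" using setcs' ane unfolding F_def by auto
  have dlv: "\<And>g \<delta>. (g, \<delta>) \<in> set \<alpha> \<Longrightarrow> dl g = \<delta>"
    unfolding dl_def using ir(3) by (simp add: map_of_is_SomeI)
  have a01: "\<And>g \<delta>. (g, \<delta>) \<in> set \<alpha> \<Longrightarrow> \<delta> \<in> {0, 1}" using ir(1) by auto
  have Idel_eq: "Idel D T = (cs', rowsI)"
    using cs'ne unfolding Idel_def Let_def rowsI_def pr_def cs'_def cs_def rs_def by simp
  have fstQ: "fst Q = cs'" unfolding Q_def Jrep_def Idel_eq by simp
  have sndQ: "snd Q = map (\<lambda>(r, d). (r, \<nu> r)) rowsI" unfolding Q_def Jrep_def Idel_eq by simp
  have QnL: "Q \<noteq> Lambda" using fstQ cs'ne unfolding Lambda_def by auto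
  have AtQ: "At Q = F" unfolding At_def fstQ setcs' ..
  have Qrows: "\<And>v d. (v, d) \<in> set (snd Q) \<Longrightarrow> \<exists>r e. (r, e) \<in> set rs \<and> v = pr r \<and> d = \<nu> v"
  proof -
    fix v d assume "(v, d) \<in> set (snd Q)"
    then obtain i where "i < length rs" "v = pr (fst (rs ! i))" "d = \<nu> v"
      unfolding sndQ rowsI_def by auto
    then show "\<exists>r e. (r, e) \<in> set rs \<and> v = pr r \<and> d = \<nu> v"
      by (intro exI[of _ "fst (rs ! i)"] exI[of _ "snd (rs ! i)"]) auto
  qed
  have Qall: "\<And>r e. (r, e) \<in> set rs \<Longrightarrow> (pr r, \<nu> (pr r)) \<in> set (snd Q)"
  proof -
    fix r e assume "(r, e) \<in> set rs"
    then obtain i where i: "i < length rs" "rs ! i = (r, e)" by (auto simp: in_set_conv_nth)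
    define j where "j = (LEAST j. pr (fst (rs ! j)) = pr r)"
    have pj: "pr (fst (rs ! j)) = pr r" unfolding j_def by (rule LeastI[of _ i]) (simp add: i)
    have ji: "j \<le> i" unfolding j_def by (rule Least_le) (simp add: i)
    have cond: "\<forall>j'<j. pr (fst (rs ! j')) \<noteq> pr (fst (rs ! j))"
      using not_less_Least pj unfolding j_def by fastforce
    have "(pr (fst (rs ! j)), snd (rs ! j)) \<in> set rowsI"
      unfolding rowsI_def using ji i(1) cond by auto
    then show "(pr r, \<nu> (pr r)) \<in> set (snd Q)" unfolding sndQ using pj by force
  qed
  have entryQ: "\<And>g r. g \<in> F \<Longrightarrow> entry cs' (pr r) g = entry cs r g"
    unfolding pr_def using entry_map[OF dcs'] setcs' by auto
  have satQ: "\<And>w r. fst ` set w \<subseteq> F \<Longrightarrow> sat cs' (pr r) w \<longleftrightarrow> sat cs r w"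
    unfolding sat_def using entryQ by fastforce
  have ent01: "\<And>r e f. (r, e) \<in> set rs \<Longrightarrow> f \<in> set cs \<Longrightarrow> entry cs r f \<in> {0, 1}"
    using entry_in rowsw by blast
  have corr: "\<And>a f \<delta>. (f, \<delta>) \<in> set \<alpha> \<Longrightarrow>
      sub Q (a @ [(f, 1 - \<delta>)]) = Lambda \<or> f \<in> Pi (sub Q (a @ [(f, 1 - \<delta>)]))"
  proof -
    fix a f \<delta> assume fd: "(f, \<delta>) \<in> set \<alpha>"
    have "f \<in> d" if "(v, d) \<in> set (snd (sub Q (a @ [(f, 1 - \<delta>)])))" for v d
    proof -
      have "(v, d) \<in> set (snd Q)" "sat cs' v (a @ [(f, 1 - \<delta>)])"
        using sub_memD[OF that] fstQ by auto
      then have "entry cs' v f = 1 - \<delta>" "d = \<nu> v" using Qrows by (auto simp: sat_def)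
      moreover have "1 - \<delta> \<noteq> dl f" using dlv[OF fd] a01[OF fd] by auto
      moreover have "f \<in> F" using fd unfolding F_def by force
      ultimately have "f \<in> NS v" "d = \<nu> v" unfolding NS_def by auto
      then show "f \<in> d" unfolding \<nu>_def by auto
    qed
    then show "sub Q (a @ [(f, 1 - \<delta>)]) = Lambda \<or> f \<in> Pi (sub Q (a @ [(f, 1 - \<delta>)]))"
      unfolding Pi_def by auto
  qed
  have aF: "fst ` set \<alpha> \<subseteq> F" unfolding F_def by simp
  have corr\<alpha>: "sub Q \<alpha> = Lambda"
    unfolding sub_Lambda_iff fstQ
  proof
    fix row assume "row \<in> set (snd Q)"
    then obtain r e where "(r, e) \<in> set rs" "fst row = pr r" using Qrows[of "fst row" "snd row"] by auto
    then show "\<not> sat cs' (fst row) \<alpha>" using nosat satQ[OF aF] by auto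
  qed
  have rowcov: "\<And>v d. (v, d) \<in> set (snd Q) \<Longrightarrow> \<exists>f \<delta>. (f, \<delta>) \<in> set \<alpha> \<and> entry cs' v f = 1 - \<delta>"
  proof -
    fix v d assume "(v, d) \<in> set (snd Q)"
    then obtain r e where re: "(r, e) \<in> set rs" "v = pr r" using Qrows by blast
    then obtain f \<delta> where fd: "(f, \<delta>) \<in> set \<alpha>" "entry cs r f \<noteq> \<delta>"
      using nosat unfolding sat_def by fastforce
    have "f \<in> F" using fd unfolding F_def by force
    then have "entry cs r f \<in> {0,1}" using ent01 re FAt by blast
    then have "entry cs r f = 1 - \<delta>" using fd(2) a01[OF fd(1)] by auto
    then have "entry cs' v f = 1 - \<delta>" using entryQ[OF \<open>f \<in> F\<close>, of r] re(2) by simp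
    then show "\<exists>f \<delta>. (f, \<delta>) \<in> set \<alpha> \<and> entry cs' v f = 1 - \<delta>" using fd by blast
  qed
  define \<Gamma>n where "\<Gamma>n = map (\<lambda>(f, \<delta>). Node f [(1 - \<delta>, Leaf f)]) \<alpha>"
  have tpn: "\<And>w d. tree_path \<Gamma>n w d \<longleftrightarrow> (\<exists>\<delta>. (d, \<delta>) \<in> set \<alpha> \<and> w = [(d, 1 - \<delta>)])"
  proof
    fix w d assume "tree_path \<Gamma>n w d"
    then obtain f \<delta> where fd: "(f, \<delta>) \<in> set \<alpha>" "node_path (Node f [(1 - \<delta>, Leaf f)]) w d"
      unfolding tree_path_def \<Gamma>n_def by auto
    then show "\<exists>\<delta>. (d, \<delta>) \<in> set \<alpha> \<and> w = [(d, 1 - \<delta>)]"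
      unfolding single_node_path by blast
  next
    fix w d assume "\<exists>\<delta>. (d, \<delta>) \<in> set \<alpha> \<and> w = [(d, 1 - \<delta>)]"
    then obtain \<delta> where fd: "(d, \<delta>) \<in> set \<alpha>" "w = [(d, 1 - \<delta>)]" by blast
    have "node_path (Node d [(1 - \<delta>, Leaf d)]) w d"
      using fd(2) unfolding single_node_path by simp
    moreover have "Node d [(1 - \<delta>, Leaf d)] \<in> set \<Gamma>n" unfolding \<Gamma>n_def using fd(1) by force
    ultimately show "tree_path \<Gamma>n w d" unfolding tree_path_def by blast
  qed
  have ndt: "nondet_tree_for Q \<Gamma>n"
    unfolding nondet_tree_for_def
  proof (intro conjI)
    show "wf_tree \<Gamma>n" unfolding wf_tree_def \<Gamma>n_def using ane
      by (auto intro!: single_node_wf)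
    show "tree_At \<Gamma>n \<subseteq> At Q" unfolding AtQ F_def
    proof
      fix h assume "h \<in> tree_At \<Gamma>n"
      then obtain f \<delta> where fd: "(f, \<delta>) \<in> set \<alpha>" "node_attr (Node f [(1 - \<delta>, Leaf f)]) h"
        unfolding tree_At_def \<Gamma>n_def by auto
      have "h = f" by (rule single_node_attr[OF fd(2)])
      then show "h \<in> fst ` set \<alpha>" using fd(1) by force
    qed
    show "\<forall>row\<in>set (snd Q). \<exists>w d. tree_path \<Gamma>n w d \<and> row \<in> set (snd (sub Q w))"
    proof
      fix row assume row: "row \<in> set (snd Q)"
      then obtain f \<delta> where fd: "(f, \<delta>) \<in> set \<alpha>" "entry cs' (fst row) f = 1 - \<delta>"
        using rowcov[of "fst row" "snd row"] by auto
      have "row \<in> set (snd (sub Q [(f, 1 - \<delta>)]))"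
        using sub_memI[OF row, of "[(f, 1 - \<delta>)]"] fd(2) fstQ by (simp add: sat_def)
      then show "\<exists>w d. tree_path \<Gamma>n w d \<and> row \<in> set (snd (sub Q w))"
        using tpn fd(1) by blast
    qed
    show "\<forall>w d. tree_path \<Gamma>n w d \<longrightarrow> sub Q w = Lambda \<or> d \<in> Pi (sub Q w)"
      using tpn corr[of _ _ "[]"] by auto
  qed
  have psin: "psi_tree \<psi> \<Gamma>n \<le> m_psi \<psi> T"
  proof -
    have mT: "m_psi \<psi> T = Max ((\<lambda>f. \<psi> [f]) ` At T)"
      unfolding m_psi_def using TnL by (simp add: setcompr_eq_image)
    have finAt: "finite (At T)" unfolding At_def by simp
    have "x \<le> m_psi \<psi> T" if xS: "x \<in> {psi_word \<psi> w | w d. tree_path \<Gamma>n w d}" for x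
    proof -
      obtain f \<delta> where "(f, \<delta>) \<in> set \<alpha>" "x = \<psi> [f]"
        using xS tpn unfolding psi_word_def by auto
      moreover have "f \<in> At T" using calculation(1) ir(1) by auto
      ultimately show ?thesis unfolding mT using finAt by auto
    qed
    moreover have "{psi_word \<psi> w | w d. tree_path \<Gamma>n w d} \<noteq> {}"
    proof -
      obtain f \<delta> where "(f, \<delta>) \<in> set \<alpha>" using ane by (cases \<alpha>) auto
      then have "tree_path \<Gamma>n [(f, 1 - \<delta>)] f" using tpn by blast
      then show ?thesis by blast
    qed
    ultimately show ?thesis unfolding psi_tree_def
      using finite_tree_psis by (simp add: Max_le_iff)
  qed
  have psia: "psi_a \<psi> Q \<le> m_psi \<psi> T"
  proof -
    have "psi_a \<psi> Q \<le> psi_tree \<psi> \<Gamma>n"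
      unfolding psi_a_def using QnL by simp (rule Least_le, use ndt in blast)
    then show ?thesis using psin by simp
  qed
  have detc: "det_tree_for Q [chain \<alpha>]"
    unfolding det_tree_for_def nondet_tree_for_def
  proof (intro conjI)
    have cw: "wf_node (chain \<alpha>) \<and> det_node (chain \<alpha>)" using chain_wf a01 by fastforce
    then show "wf_tree [chain \<alpha>]" unfolding wf_tree_def by simp
    show "tree_At [chain \<alpha>] \<subseteq> At Q" unfolding tree_At_def AtQ F_def using chain_attr by auto
    show "\<forall>row\<in>set (snd Q). \<exists>w d. tree_path [chain \<alpha>] w d \<and> row \<in> set (snd (sub Q w))"
    proof
      fix row assume row: "row \<in> set (snd Q)"
      then obtain r e where re: "(r, e) \<in> set rs" "fst row = pr r" using Qrows[of "fst row" "snd row"] by auto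
      have "\<not> sat cs' (fst row) \<alpha>" using nosat[OF re(1)] satQ[OF aF] re(2) by simp
      moreover have "\<forall>(f, \<delta>) \<in> set \<alpha>. entry cs' (fst row) f \<in> {0, 1} \<and> \<delta> \<in> {0, 1}"
      proof (clarify)
        fix f \<delta> assume fd: "(f, \<delta>) \<in> set \<alpha>"
        then have "f \<in> F" unfolding F_def by force
        then show "entry cs' (fst row) f \<in> {0, 1} \<and> \<delta> \<in> {0, 1}"
          using ent01[OF re(1)] FAt entryQ re(2) a01[OF fd] by auto
      qed
      ultimately obtain w d where "node_path (chain \<alpha>) w d" "sat cs' (fst row) w"
        using chain_cover by blast
      then show "\<exists>w d. tree_path [chain \<alpha>] w d \<and> row \<in> set (snd (sub Q w))"
        using sub_memI[OF row] fstQ unfolding tree_path_def by auto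
    qed
    show "\<forall>w d. tree_path [chain \<alpha>] w d \<longrightarrow> sub Q w = Lambda \<or> d \<in> Pi (sub Q w)"
    proof (intro allI impI)
      fix w d assume "tree_path [chain \<alpha>] w d"
      then have "node_path (chain \<alpha>) w d" unfolding tree_path_def by simp
      from chain_path[OF this] show "sub Q w = Lambda \<or> d \<in> Pi (sub Q w)"
      proof
        assume "w = \<alpha>" then show ?thesis using corr\<alpha> by simp
      next
        assume "\<exists>a f \<delta> b. \<alpha> = a @ (f, \<delta>) # b \<and> w = a @ [(f, 1 - \<delta>)] \<and> d = f"
        then obtain a f \<delta> b where "\<alpha> = a @ (f, \<delta>) # b" "w = a @ [(f, 1 - \<delta>)]" "d = f" by blast
        then show ?thesis using corr[of f \<delta> a] by simp
      qed
    qed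
    show "length [chain \<alpha>] = 1" by simp
    show "\<forall>c\<in>set [chain \<alpha>]. det_node c" using cw by simp
  qed
  have R: "\<And>f. f \<in> F \<Longrightarrow> \<exists>v. (v, {f}) \<in> set (snd Q) \<and> (\<forall>g\<in>F-{f}. entry (fst Q) v g = dl g)"
  proof -
    fix f assume fF: "f \<in> F"
    have "sub T (filter (\<lambda>x. fst x \<noteq> f) \<alpha>) \<noteq> Lambda" using ir(4) fF unfolding F_def by blast
    then obtain r e where re: "(r, e) \<in> set rs" "sat cs r (filter (\<lambda>x. fst x \<noteq> f) \<alpha>)"
      unfolding sub_Lambda_iff cs_def rs_def by auto
    have eq: "entry cs r g = dl g" if gF: "g \<in> F - {f}" for g
    proof -
      obtain \<delta> where "(g, \<delta>) \<in> set \<alpha>" using gF unfolding F_def by auto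
      then show ?thesis using re(2) dlv gF unfolding sat_def by fastforce
    qed
    have neq: "entry cs r f \<noteq> dl f"
    proof
      assume a: "entry cs r f = dl f"
      have "sat cs r \<alpha>" unfolding sat_def
      proof clarify
        fix g \<delta> assume gd: "(g, \<delta>) \<in> set \<alpha>"
        show "entry cs r g = \<delta>"
        proof (cases "g = f")
          case True then show ?thesis using a dlv[OF gd] by simp
        next
          case False then show ?thesis using re(2) gd unfolding sat_def by fastforce
        qed
      qed
      then show False using nosat re(1) by blast
    qed
    have NSv: "NS (pr r) = {f}"
    proof
      show "NS (pr r) \<subseteq> {f}"
      proof
        fix x assume "x \<in> NS (pr r)"
        then have "x \<in> F" "entry cs r x \<noteq> dl x" unfolding NS_def using entryQ by auto
        then show "x \<in> {f}" using eq[of x] by blast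
      qed
      show "{f} \<subseteq> NS (pr r)" unfolding NS_def using entryQ[OF fF] neq fF by auto
    qed
    have "(pr r, {f}) \<in> set (snd Q)" using Qall[OF re(1)] NSv unfolding \<nu>_def by simp
    moreover have "\<forall>g\<in>F-{f}. entry (fst Q) (pr r) g = dl g" using eq entryQ fstQ by auto
    ultimately show "\<exists>v. (v, {f}) \<in> set (snd Q) \<and> (\<forall>g\<in>F-{f}. entry (fst Q) v g = dl g)" by blast
  qed
  have finF: "finite F" unfolding F_def by simp
  have cardF: "card F = length \<alpha>" unfolding F_def using ir(3)
    by (metis distinct_card length_map set_map)
  have lb: "length \<alpha> \<le> psi_tree \<psi> \<Gamma> + 1" if dt: "det_tree_for Q \<Gamma>" for \<Gamma>
  proof -
    obtain c where \<Gamma>: "\<Gamma> = [c]" using dt unfolding det_tree_for_def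
      by (metis One_nat_def length_0_conv length_Suc_conv)
    have nd: "nondet_tree_for Q \<Gamma>" and dc: "det_node c" using dt \<Gamma> unfolding det_tree_for_def by auto
    have wc: "wf_node c" using nd \<Gamma> unfolding nondet_tree_for_def wf_tree_def by auto
    have at: "\<forall>g. node_attr c g \<longrightarrow> g \<in> F" using nd \<Gamma> AtQ unfolding nondet_tree_for_def tree_At_def by auto
    have cov: "\<forall>row\<in>set (snd Q). sat (fst Q) (fst row) [] \<longrightarrow> (\<exists>w d. node_path c w d \<and> sat (fst Q) (fst row) w)"
    proof (intro ballI impI)
      fix row assume "row \<in> set (snd Q)"
      then obtain w d where "tree_path \<Gamma> w d" "row \<in> set (snd (sub Q w))"
        using nd unfolding nondet_tree_for_def by blast
      then show "\<exists>w d. node_path c w d \<and> sat (fst Q) (fst row) w"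
        using sub_memD \<Gamma> unfolding tree_path_def by fastforce
    qed
    have cr: "\<forall>w d. node_path c w d \<longrightarrow> sub Q ([] @ w) = Lambda \<or> d \<in> Pi (sub Q ([] @ w))"
      using nd \<Gamma> unfolding nondet_tree_for_def tree_path_def by auto
    obtain w d where wd: "node_path c w d" "card F \<le> card (F \<inter> fst ` set ([] @ w)) + 1"
      using LB[of F Q dl c "[]", OF finF R dc wc at _ cov cr] by auto
    have "card (F \<inter> fst ` set w) \<le> card (fst ` set w)" by (intro card_mono) auto
    also have "\<dots> \<le> card (set w)" by (rule card_image_le) simp
    also have "\<dots> \<le> length w" by (rule card_length)
    also have "\<dots> = length (map fst w)" by simp
    also have "\<dots> \<le> psi_word \<psi> w" using bm unfolding bounded_measure_def psi_word_def by blast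
    also have "\<dots> \<le> psi_tree \<psi> \<Gamma>" using psi_tree_ge[of \<Gamma> w d \<psi>] wd(1) \<Gamma> unfolding tree_path_def by simp
    finally show ?thesis using wd(2) cardF by simp
  qed
  have psid: "length \<alpha> \<le> psi_d \<psi> Q + 1"
  proof -
    have "\<exists>\<Gamma>. det_tree_for Q \<Gamma> \<and> psi_tree \<psi> \<Gamma> = psi_d \<psi> Q"
      unfolding psi_d_def using QnL by simp (rule LeastI_ex, use detc in blast)
    then obtain \<Gamma> where "det_tree_for Q \<Gamma>" "psi_tree \<psi> \<Gamma> = psi_d \<psi> Q" by blast
    then show ?thesis using lb[of \<Gamma>] by simp
  qed
  have "Q \<in> closure1 T"
    unfolding closure1_def Q_def
  proof (intro CollectI exI conjI)
    show "D \<subseteq> At T" unfolding D_def by auto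
    show "\<forall>v. length v = card (At T - D) \<and> set v \<subseteq> {0, 1} \<longrightarrow> \<nu> v \<noteq> {} \<and> finite (\<nu> v)"
      unfolding \<nu>_def NS_def using finF by auto
  qed (rule refl)
  then show ?thesis using psia psid by blast
qed

lemma irr_len: "irreducible_ann T \<alpha> \<Longrightarrow> length \<alpha> \<le> card (At T)"
proof -
  assume irr: "irreducible_ann T \<alpha>"
  note ir = irr_facts[OF irr]
  have "length \<alpha> = card (set (map fst \<alpha>))" using ir(3) by (metis distinct_card length_map)
  also have "\<dots> \<le> card (At T)" using ir(1) by (intro card_mono) (auto simp: At_def)
  finally show ?thesis .
qed

theorem lemma14:
  fixes A :: "table set" and \<psi> :: "nat list \<Rightarrow> nat"
  assumes "closed_class A" and "nontrivial A" and "bounded_measure \<psi>"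
    and "\<not> (\<forall>n. G_fun \<psi> A n \<noteq> None)"
  shows "\<not> (\<forall>n. H_fun \<psi> A n \<noteq> None)"
proof -
  obtain n where "G_fun \<psi> A n = None" using assms(4) by blast
  then have infS: "infinite (G ` A_psi \<psi> A n)" by (simp add: G_fun_def Let_def split: if_splits)
  have AM: "A \<subseteq> M2" and Acl: "closure A = A" using assms(1) unfolding closed_class_def by simp_all
  define SH where "SH = {psi_d \<psi> T | T. T \<in> A \<and> psi_a \<psi> T \<le> n}"
  have "infinite SH"
  proof
    assume "finite SH"
    then obtain m where m0: "\<forall>x\<in>SH. x \<le> m" by (auto simp: finite_nat_set_iff_bounded_le)
    then have m: "\<And>x. x \<in> SH \<Longrightarrow> x \<le> m" by blast
    have "\<exists>g \<in> G ` A_psi \<psi> A n. m + 2 < g"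
    proof (rule ccontr)
      assume "\<not> (\<exists>g \<in> G ` A_psi \<psi> A n. m + 2 < g)"
      then have "G ` A_psi \<psi> A n \<subseteq> {..m + 2}" by force
      then show False using infS finite_subset by blast
    qed
    then obtain g where g: "g \<in> G ` A_psi \<psi> A n" "m + 2 < g" by blast
    then obtain T where T: "T \<in> A" "m_psi \<psi> T \<le> n" "g = G T" unfolding A_psi_def by auto
    have TnL: "T \<noteq> Lambda"
    proof
      assume "T = Lambda" then have "G T = 0" unfolding G_def by simp
      then show False using g(2) T(3) by simp
    qed
    have ex: "\<exists>\<alpha>. irreducible_ann T \<alpha>"
    proof (rule ccontr)
      assume na: "\<not> (\<exists>\<alpha>. irreducible_ann T \<alpha>)"
      have "G T = 0" unfolding G_def using na by (simp only: if_False if_not_P if_cancel)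
      then show False using g(2) T(3) by simp
    qed
    have GT: "G T = Max {length \<alpha> | \<alpha>. irreducible_ann T \<alpha>}" using TnL ex unfolding G_def by simp
    have fin: "finite {length \<alpha> | \<alpha>. irreducible_ann T \<alpha>}"
    proof (rule finite_subset[of _ "{..card (At T)}"])
      show "{length \<alpha> | \<alpha>. irreducible_ann T \<alpha>} \<subseteq> {..card (At T)}"
        using irr_len by fastforce
    qed simp
    have ne: "{length \<alpha> | \<alpha>. irreducible_ann T \<alpha>} \<noteq> {}" using ex by blast
    have "G T \<in> {length \<alpha> | \<alpha>. irreducible_ann T \<alpha>}" unfolding GT
      by (rule Max_in[OF fin ne])
    then obtain \<alpha> where \<alpha>: "irreducible_ann T \<alpha>" "length \<alpha> = G T" by fastforce
    have wf: "wf_table T" using AM T(1) unfolding M2_def by auto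
    obtain Q where Q: "Q \<in> closure1 T" "psi_a \<psi> Q \<le> m_psi \<psi> T" "length \<alpha> \<le> psi_d \<psi> Q + 1"
      using main_constr[OF wf TnL \<alpha>(1) assms(3)] by blast
    have "Q \<in> closure A" unfolding closure_def using Q(1) T(1) by blast
    then have "Q \<in> A" using Acl by simp
    moreover have "psi_a \<psi> Q \<le> n" using Q(2) T(2) by simp
    ultimately have "psi_d \<psi> Q \<in> SH" unfolding SH_def by blast
    then have "psi_d \<psi> Q \<le> m" by (rule m)
    then show False using Q(3) \<alpha>(2) T(3) g(2) by simp
  qed
  then have "H_fun \<psi> A n = None" unfolding H_fun_def Let_def SH_def by simp
  then show ?thesis by blast
qed

end
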